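(* The maps $\iota_{1\otimes2}:\mathcal B\to S(A^{(1)}_{1\otimes2})\otimes S(A^{(2)}_{1\otimes2})$ and $\iota_{2\otimes1}:\mathcal B\to S(A^{(2)}_{2\otimes1})\otimes S(A^{(1)}_{2\otimes1})$ are both isomorphisms of algebras with respect to the shuffle product.
   Context: Forms on $\mathbf P^1\times\mathbf P^1$ with coordinates $(z_1,z_2)$: $\zeta_i=dz_i/z_i$, $\zeta_{ii}=dz_i/(1-z_i)$ ($i=1,2$), $\zeta_{12}=d(z_1z_2)/(1-z_1z_2)$, $\zeta^{(1)}_{12}=z_2dz_1/(1-z_1z_2)$, $\zeta^{(2)}_{12}=z_1dz_2/(1-z_1z_2)$. For an alphabet $B$ of such forms, $S(B)$ is the vector space with basis the words in $B$ (empty word $\mathbf 1$), graded by length, with concatenation $\circ$, shuffle product $⧢$ (defined by $\mathbf 1⧢w=w⧢\mathbf 1=w$, $(a\circ u)⧢(b\circ v)=a\circ(u⧢(b\circ v))+b\circ((a\circ u)⧢v)$ for letters $a,b$), and deconcatenation coproduct $\Delta^*(\omega_1\circ\cdots\circ\omega_s)=\sum_{l=0}^s(\omega_1\circ\cdots\circ\omega_l)\otimes(\omega_{l+1}\circ\cdots\circ\omega_s)$; tensor products carry the componentwise shuffle product. $A=\{\zeta_1,\zeta_{11},\zeta_2,\zeta_{22},\zeta_{12}\}$, $A^{(1)}_{1\otimes2}=\{\zeta_1,\zeta_{11},\zeta^{(1)}_{12}\}$, $A^{(2)}_{1\otimes2}=\{\zeta_2,\zeta_{22}\}$, $A^{(2)}_{2\otimes1}=\{\zeta_2,\zeta_{22},\zeta^{(2)}_{12}\}$,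 $A^{(1)}_{2\otimes1}=\{\zeta_1,\zeta_{11}\}$. An element $\sum_I c_I\omega_{i_1}\circ\cdots\circ\omega_{i_s}\in S_s(A)$ satisfies Chen's integrability condition if for each $1\le l<s$, $\sum_I c_I\omega_{i_1}\otimes\cdots\otimes(\omega_{i_l}\wedge\omega_{i_{l+1}})\otimes\cdots\otimes\omega_{i_s}=0$ as a multiple differential form. The reduced bar algebra $\mathcal B=\bigoplus_s\mathcal B_s$ is the span of homogeneous elements satisfying it (a shuffle subalgebra of $S(A)$). For $\{i_1,i_2\}=\{1,2\}$: $\Pr^{(i_1)}_{i_1\otimes i_2}:S(A)\to S(A^{(i_1)}_{i_1\otimes i_2})$ replaces each letter of a word by its restriction to $dz_{i_2}=0$ ($\zeta_{i_1}\mapsto\zeta_{i_1}$, $\zeta_{i_1i_1}\mapsto\zeta_{i_1i_1}$, $\zeta_{12}\mapsto\zeta^{(i_1)}_{12}$, $\zeta_{i_2},\zeta_{i_2i_2}\mapsto0$); $\Pr^{(i_2)}_{i_1\otimes i_2}:S(A)\to S(A^{(i_2)}_{i_1\otimes i_2})$ fixes words in $\zeta_{i_2},\zeta_{i_2i_2}$ and sends every other word to $0$. Then $\iota_{i_1\otimes i_2}=(\Pr^{(i_1)}_{i_1\otimes i_2}|_{\mathcal B}\otimes\Pr^{(i_2)}_{i_1\otimes i_2}|_{\mathcal B})\circ\Delta^*$ restricted to $\mathcal B$. *)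

theory Defs
  imports Complex_Main
begin

datatype letter = Z1 | Z11 | Z2 | Z22 | Z12 | Z12_1 | Z12_2

text \<open>A 1-form f1 dz1 + f2 dz2 is represented by its coefficient pair (f1, f2),
  as functions of (z1, z2).\<close>

fun form :: "letter \<Rightarrow> (complex \<times> complex \<Rightarrow> complex) \<times> (complex \<times> complex \<Rightarrow> complex)" where
  "form Z1    = ((\<lambda>(z1, z2). 1 / z1), (\<lambda>_. 0))"
| "form Z11   = ((\<lambda>(z1, z2). 1 / (1 - z1)), (\<lambda>_. 0))"
| "form Z2    = ((\<lambda>_. 0), (\<lambda>(z1, z2). 1 / z2))"
| "form Z22   = ((\<lambda>_. 0), (\<lambda>(z1, z2). 1 / (1 - z2)))"
| "form Z12   = ((\<lambda>(z1, z2). z2 / (1 - z1 * z2)), (\<lambda>(z1, z2). z1 / (1 - z1 * z2)))"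
| "form Z12_1 = ((\<lambda>(z1, z2). z2 / (1 - z1 * z2)), (\<lambda>_. 0))"
| "form Z12_2 = ((\<lambda>_. 0), (\<lambda>(z1, z2). z1 / (1 - z1 * z2)))"

text \<open>Coefficient of dz1 /\ dz2 in the wedge product of two letters.\<close>
definition wedge :: "letter \<Rightarrow> letter \<Rightarrow> complex \<times> complex \<Rightarrow> complex" where
  "wedge a b z = fst (form a) z * snd (form b) z - snd (form a) z * fst (form b) z"

text \<open>Dense open set on which all the forms are regular; a rational 2-form vanishes
  iff its coefficient vanishes there.\<close>
definition Ureg :: "(complex \<times> complex) set" where
  "Ureg = {(z1, z2). z1 \<noteq> 0 \<and> z1 \<noteq> 1 \<and> z2 \<noteq> 0 \<and> z2 \<noteq> 1 \<and> z1 * z2 \<noteq> 1}"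

definition A :: "letter set" where "A = {Z1, Z11, Z2, Z22, Z12}"
definition A1_12 :: "letter set" where "A1_12 = {Z1, Z11, Z12_1}"
definition A2_12 :: "letter set" where "A2_12 = {Z2, Z22}"
definition A2_21 :: "letter set" where "A2_21 = {Z2, Z22, Z12_2}"
definition A1_21 :: "letter set" where "A1_21 = {Z1, Z11}"

text \<open>Elements of S(B): finitely supported rational coefficient functions on words,
  supported on words in the alphabet B.\<close>
definition supp :: "('w \<Rightarrow> rat) \<Rightarrow> 'w set" where
  "supp x = {w. x w \<noteq> 0}"

definition S :: "letter set \<Rightarrow> (letter list \<Rightarrow> rat) set" where
  "S B = {x. finite (supp x) \<and> (\<forall>w \<in> supp x. set w \<subseteq> B)}"

text \<open>Coefficient of the word w in the shuffle product u \<diamondop> v of two words.\<close>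
fun sh :: "'a list \<Rightarrow> 'a list \<Rightarrow> 'a list \<Rightarrow> rat" where
  "sh [] v w = (if w = v then 1 else 0)"
| "sh (a # u) [] w = (if w = a # u then 1 else 0)"
| "sh (a # u) (b # v) [] = 0"
| "sh (a # u) (b # v) (c # w) =
     (if c = a then sh u (b # v) w else 0) + (if c = b then sh (a # u) v w else 0)"

definition shuffle :: "(letter list \<Rightarrow> rat) \<Rightarrow> (letter list \<Rightarrow> rat) \<Rightarrow> (letter list \<Rightarrow> rat)" where
  "shuffle x y w = (\<Sum>u \<in> supp x. \<Sum>v \<in> supp y. x u * y v * sh u v w)"

definition unit_word :: "letter list \<Rightarrow> rat" where
  "unit_word w = (if w = [] then 1 else 0)"

definition T :: "letter set \<Rightarrow> letter set \<Rightarrow> (letter list \<times> letter list \<Rightarrow> rat) set" where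
  "T B1 B2 = {X. finite (supp X) \<and> (\<forall>p \<in> supp X. set (fst p) \<subseteq> B1 \<and> set (snd p) \<subseteq> B2)}"

definition tshuffle :: "(letter list \<times> letter list \<Rightarrow> rat) \<Rightarrow> (letter list \<times> letter list \<Rightarrow> rat)
    \<Rightarrow> (letter list \<times> letter list \<Rightarrow> rat)" where
  "tshuffle X Y = (\<lambda>(w1, w2). \<Sum>p \<in> supp X. \<Sum>q \<in> supp Y.
      X p * Y q * sh (fst p) (fst q) w1 * sh (snd p) (snd q) w2)"

definition unit_tensor :: "letter list \<times> letter list \<Rightarrow> rat" where
  "unit_tensor p = (if p = ([], []) then 1 else 0)"

definition hcomp :: "nat \<Rightarrow> (letter list \<Rightarrow> rat) \<Rightarrow> (letter list \<Rightarrow> rat)" where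
  "hcomp s x w = (if length w = s then x w else 0)"

text \<open>Since the letters of A are linearly independent, the multiple differential form
  sum_I c_I w_i1 (x) ... (x) (w_il /\ w_il+1) (x) ... (x) w_is vanishes iff for every fixed
  prefix u (length l-1) and suffix v (length s-l-1) the 2-form
  sum_{a,b} c_{u a b v} a /\ b vanishes.\<close>
definition chen_integrable :: "nat \<Rightarrow> (letter list \<Rightarrow> rat) \<Rightarrow> bool" where
  "chen_integrable s x \<longleftrightarrow>
     (\<forall>l. 1 \<le> l \<and> l < s \<longrightarrow>
       (\<forall>u v. length u = l - 1 \<and> length v = s - l - 1 \<longrightarrow>
         (\<forall>z \<in> Ureg. (\<Sum>a \<in> A. \<Sum>b \<in> A. of_rat (x (u @ [a, b] @ v)) * wedge a b z) = 0)))"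

definition Bs :: "nat \<Rightarrow> (letter list \<Rightarrow> rat) set" where
  "Bs s = {x \<in> S A. (\<forall>w \<in> supp x. length w = s) \<and> chen_integrable s x}"

definition Bar :: "(letter list \<Rightarrow> rat) set" where
  "Bar = {x \<in> S A. \<forall>s. hcomp s x \<in> Bs s}"

text \<open>Restriction of letters to dz2 = 0 (case 1 (x) 2) and to dz1 = 0 (case 2 (x) 1);
  None means the restriction is 0.\<close>
fun restr12 :: "letter \<Rightarrow> letter option" where
  "restr12 Z1 = Some Z1" | "restr12 Z11 = Some Z11" | "restr12 Z12 = Some Z12_1"
| "restr12 Z2 = None" | "restr12 Z22 = None" | "restr12 Z12_1 = None" | "restr12 Z12_2 = None"

fun restr21 :: "letter \<Rightarrow> letter option" where
  "restr21 Z2 = Some Z2" | "restr21 Z22 = Some Z22" | "restr21 Z12 = Some Z12_2"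
| "restr21 Z1 = None" | "restr21 Z11 = None" | "restr21 Z12_1 = None" | "restr21 Z12_2 = None"

text \<open>Pr^(i1) on words: letterwise restriction (None = the zero element).\<close>
definition pr_first :: "(letter \<Rightarrow> letter option) \<Rightarrow> letter list \<Rightarrow> letter list option" where
  "pr_first r w = those (map r w)"

definition pr_second :: "letter set \<Rightarrow> letter list \<Rightarrow> letter list option" where
  "pr_second K w = (if set w \<subseteq> K then Some w else None)"

text \<open>(Pr^(i1) (x) Pr^(i2)) o Delta^*, extended linearly.\<close>
definition iota :: "(letter \<Rightarrow> letter option) \<Rightarrow> letter set \<Rightarrow> (letter list \<Rightarrow> rat)
    \<Rightarrow> (letter list \<times> letter list \<Rightarrow> rat)" where
  "iota r K x = (\<lambda>(u, v). \<Sum>w \<in> supp x. \<Sum>l \<in> {0..length w}.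
      (if pr_first r (take l w) = Some u \<and> pr_second K (drop l w) = Some v then x w else 0))"

definition iota12 where "iota12 = iota restr12 A2_12"
definition iota21 where "iota21 = iota restr21 A1_21"

definition shuffle_alg_iso :: "((letter list \<Rightarrow> rat) \<Rightarrow> (letter list \<times> letter list \<Rightarrow> rat))
    \<Rightarrow> letter set \<Rightarrow> letter set \<Rightarrow> bool" where
  "shuffle_alg_iso f B1 B2 \<longleftrightarrow>
     bij_betw f Bar (T B1 B2) \<and>
     (\<forall>x \<in> Bar. \<forall>y \<in> Bar. f (\<lambda>w. x w + y w) = (\<lambda>p. f x p + f y p)) \<and>
     (\<forall>c. \<forall>x \<in> Bar. f (\<lambda>w. c * x w) = (\<lambda>p. c * f x p)) \<and>
     (\<forall>x \<in> Bar. \<forall>y \<in> Bar. f (shuffle x y) = tshuffle (f x) (f y)) \<and>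
     f unit_word = unit_tensor"

end

theory Submission
  imports Defs
begin


lemma sh_Nil2: "sh a [] w = (if w = a then 1 else 0)"
  by (cases a) auto

lemma sh_Nil3: "sh a b [] = (if a = [] \<and> b = [] then 1 else 0)"
  by (cases a; cases b) auto

lemma sh_cons: "sh a b (c # w) =
   (case a of [] \<Rightarrow> 0 | d # a' \<Rightarrow> if d = c then sh a' b w else 0) +
   (case b of [] \<Rightarrow> 0 | d # b' \<Rightarrow> if d = c then sh a b' w else 0)"
  by (cases a; cases b) (auto simp: sh_Nil2)

lemma sh_nz: "sh a b w \<noteq> 0 \<Longrightarrow> length w = length a + length b \<and> set w = set a \<union> set b"
proof (induction a b w rule: sh.induct)
  case (4 a u b v c w)
  show ?case
  proof (cases "c = a \<and> sh u (b # v) w \<noteq> 0")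
    case True
    then show ?thesis using "4.IH"(1) by auto
  next
    case False
    then have "c = b \<and> sh (a # u) v w \<noteq> 0" using "4.prems" by (auto split: if_splits)
    then show ?thesis using "4.IH"(2) by auto
  qed
qed (auto split: if_splits)

lemma sh_map: "inj_on f (set a \<union> set b \<union> set w) \<Longrightarrow> sh (map f a) (map f b) (map f w) = sh a b w"
proof (induction a b w rule: sh.induct)
  case (1 v w)
  have i: "inj_on f (set w \<union> set v)" by (rule inj_on_subset[OF "1"]) auto
  have "(map f w = map f v) = (w = v)"
    by (rule inj_on_map_eq_map[OF i])
  then show ?case by simp
next
  case (2 a u w)
  have i: "inj_on f (set w \<union> set (a # u))" by (rule inj_on_subset[OF "2"]) auto
  have "(map f w = map f (a # u)) = (w = a # u)"
    by (rule inj_on_map_eq_map[OF i])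
  then show ?case by simp
next
  case (3 a u b v)
  then show ?case by simp
next
  case (4 a u b v c w)
  have ia: "(f c = f a) = (c = a)" using "4.prems" by (auto dest: inj_onD)
  have ib: "(f c = f b) = (c = b)" using "4.prems" by (auto dest: inj_onD)
  have i1: "inj_on f (set u \<union> set (b # v) \<union> set w)" by (rule inj_on_subset[OF "4.prems"]) auto
  have i2: "inj_on f (set (a # u) \<union> set v \<union> set w)" by (rule inj_on_subset[OF "4.prems"]) auto
  have e1: "c = a \<Longrightarrow> sh (map f u) (map f (b # v)) (map f w) = sh u (b # v) w" by (rule "4.IH"(1)[OF _ i1])
  have e2: "c = b \<Longrightarrow> sh (map f (a # u)) (map f v) (map f w) = sh (a # u) v w" by (rule "4.IH"(2)[OF _ i2])
  show ?case using e1 e2 ia ib by simp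
qed

lemma sh_split:
  assumes "set U \<subseteq> F" "set V \<subseteq> K" "F \<inter> K = {}"
  shows "sh w1 w2 (U @ V) =
    (if set (dropWhile (\<lambda>x. x \<in> F) w1) \<subseteq> K \<and> set (dropWhile (\<lambda>x. x \<in> F) w2) \<subseteq> K
     then sh (takeWhile (\<lambda>x. x \<in> F) w1) (takeWhile (\<lambda>x. x \<in> F) w2) U *
          sh (dropWhile (\<lambda>x. x \<in> F) w1) (dropWhile (\<lambda>x. x \<in> F) w2) V else 0)"
  using assms(1)
proof (induction U arbitrary: w1 w2)
  case Nil
  show ?case
  proof (cases "sh w1 w2 V = 0")
    case True
    show ?thesis
    proof (cases "takeWhile (\<lambda>x. x \<in> F) w1 = [] \<and> takeWhile (\<lambda>x. x \<in> F) w2 = []")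
      case True
      then have "dropWhile (\<lambda>x. x \<in> F) w1 = w1" "dropWhile (\<lambda>x. x \<in> F) w2 = w2"
        by (metis append_Nil takeWhile_dropWhile_id)+
      then show ?thesis using True \<open>sh w1 w2 V = 0\<close> by (simp add: sh_Nil3)
    next
      case False
      then show ?thesis using True by (auto simp: sh_Nil3)
    qed
  next
    case False
    from sh_nz[OF False] have s: "set w1 \<subseteq> K" "set w2 \<subseteq> K" using assms(2) by auto
    then have t: "takeWhile (\<lambda>x. x \<in> F) w1 = []" "takeWhile (\<lambda>x. x \<in> F) w2 = []"
      using assms(3) by (cases w1; auto; cases w2; auto)+
    then have "dropWhile (\<lambda>x. x \<in> F) w1 = w1" "dropWhile (\<lambda>x. x \<in> F) w2 = w2"
      by (metis append_Nil takeWhile_dropWhile_id)+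
    then show ?thesis using s t by (simp add: sh_Nil3)
  qed
next
  case (Cons c U)
  then have cF: "c \<in> F" and UF: "set U \<subseteq> F" by auto
  note IH = Cons.IH[OF UF]
  let ?P = "\<lambda>w. set (dropWhile (\<lambda>x. x \<in> F) w) \<subseteq> K"
  let ?T = "\<lambda>w. takeWhile (\<lambda>x. x \<in> F) w"
  let ?D = "\<lambda>w. dropWhile (\<lambda>x. x \<in> F) w"
  have c1: "(case w1 of [] \<Rightarrow> 0 | d # a' \<Rightarrow> if d = c then sh a' w2 (U @ V) else 0) =
    (if ?P w1 \<and> ?P w2 then (case ?T w1 of [] \<Rightarrow> 0 | d # a' \<Rightarrow> if d = c then sh a' (?T w2) U else 0)
       * sh (?D w1) (?D w2) V else 0)"
  proof (cases w1)
    case (Cons d w1')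
    show ?thesis
    proof (cases "d = c")
      case True
      then show ?thesis using Cons cF IH[of w1' w2] by simp
    qed (use Cons in auto)
  qed simp
  have c2: "(case w2 of [] \<Rightarrow> 0 | d # b' \<Rightarrow> if d = c then sh w1 b' (U @ V) else 0) =
    (if ?P w1 \<and> ?P w2 then (case ?T w2 of [] \<Rightarrow> 0 | d # b' \<Rightarrow> if d = c then sh (?T w1) b' U else 0)
       * sh (?D w1) (?D w2) V else 0)"
  proof (cases w2)
    case (Cons d w2')
    show ?thesis
    proof (cases "d = c")
      case True
      then show ?thesis using Cons cF IH[of w1 w2'] by simp
    qed (use Cons in auto)
  qed simp
  show ?case
    apply (simp only: append_Cons sh_cons[of w1 w2] sh_cons[of "?T w1" "?T w2"] c1 c2)
    by (simp add: algebra_simps)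
qed




definition G :: "(letter \<Rightarrow> letter \<Rightarrow> rat) \<Rightarrow> complex \<times> complex \<Rightarrow> complex" where
  "G c z = (\<Sum>a\<in>A. \<Sum>b\<in>A. of_rat (c a b) * wedge a b z)"

definition rsum :: "(rat \<times> letter \<times> letter) list \<Rightarrow> (letter \<Rightarrow> letter \<Rightarrow> rat) \<Rightarrow> rat" where
  "rsum ts c = sum_list (map (\<lambda>t. fst t * c (fst (snd t)) (snd (snd t))) ts)"

definition rep :: "letter list \<Rightarrow> nat \<Rightarrow> letter \<Rightarrow> letter \<Rightarrow> letter list" where
  "rep w i a b = w[i := a, Suc i := b]"

lemma finA: "finite A" by (simp add: A_def)

locale fib =
  fixes r :: "letter \<Rightarrow> letter option" and F K B1 :: "letter set"
    and rule :: "letter \<Rightarrow> letter \<Rightarrow> (rat \<times> letter \<times> letter) list"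
  assumes AFK: "A = F \<union> K" and disj: "F \<inter> K = {}"
    and rSome: "\<And>a. r a \<noteq> None \<longleftrightarrow> a \<in> F"
    and rinj: "\<And>a b c. r a = Some c \<Longrightarrow> r b = Some c \<Longrightarrow> a = b"
    and rB1: "\<And>a c. r a = Some c \<Longrightarrow> c \<in> B1"
    and rsurj: "\<And>c. c \<in> B1 \<Longrightarrow> \<exists>a. r a = Some c"
    and rule_ok: "\<And>b a t. b \<in> K \<Longrightarrow> a \<in> F \<Longrightarrow> t \<in> set (rule b a) \<Longrightarrow> fst (snd t) \<in> F \<and> snd (snd t) \<in> A"
    and H1: "\<And>c b a. \<forall>z\<in>Ureg. G c z = 0 \<Longrightarrow> b \<in> K \<Longrightarrow> a \<in> F \<Longrightarrow> c b a = rsum (rule b a) c"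
    and H2: "\<And>c z. \<forall>b\<in>K. \<forall>a\<in>F. c b a = rsum (rule b a) c \<Longrightarrow> z \<in> Ureg \<Longrightarrow> G c z = 0"
begin

definition rf :: "letter \<Rightarrow> letter" where "rf a = the (r a)"
definition li :: "letter \<Rightarrow> letter" where "li c = (SOME a. r a = Some c)"
definition lift :: "letter list \<Rightarrow> letter list" where "lift u = map li u"
abbreviation tW where "tW w \<equiv> takeWhile (\<lambda>x. x \<in> F) w"
abbreviation dW where "dW w \<equiv> dropWhile (\<lambda>x. x \<in> F) w"
definition g :: "letter list \<Rightarrow> letter list \<times> letter list" where
  "g w = (map rf (tW w), dW w)"

lemma FA: "F \<subseteq> A" and KA: "K \<subseteq> A" using AFK by auto

lemma r_li: "c \<in> B1 \<Longrightarrow> r (li c) = Some c"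
  unfolding li_def by (rule someI_ex[OF rsurj])

lemma li_F: "c \<in> B1 \<Longrightarrow> li c \<in> F"
  using r_li rSome[of "li c"] by simp

lemma rf_F: "a \<in> F \<Longrightarrow> r a = Some (rf a)"
  using rSome[of a] by (cases "r a") (auto simp: rf_def)

lemma rf_B1: "a \<in> F \<Longrightarrow> rf a \<in> B1"
  using rf_F rB1 by blast

lemma li_rf: "a \<in> F \<Longrightarrow> li (rf a) = a"
  by (rule rinj[OF r_li[OF rf_B1] rf_F])

lemma rf_li: "c \<in> B1 \<Longrightarrow> rf (li c) = c"
  using r_li by (simp add: rf_def)

lemma rf_inj: "inj_on rf F"
  by (rule inj_onI) (metis li_rf)

lemma lift_F: "set u \<subseteq> B1 \<Longrightarrow> set (lift u) \<subseteq> F"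
  using li_F by (auto simp: lift_def)

lemma map_rf_lift: "set u \<subseteq> B1 \<Longrightarrow> map rf (lift u) = u"
  by (induction u) (auto simp: lift_def rf_li)

lemma lift_map_rf: "set w \<subseteq> F \<Longrightarrow> lift (map rf w) = w"
  by (induction w) (auto simp: lift_def li_rf)

lemma length_lift[simp]: "length (lift u) = length u" by (simp add: lift_def)

lemma those_iff: "those (map r w) = Some u \<longleftrightarrow> set u \<subseteq> B1 \<and> w = lift u"
proof (induction w arbitrary: u)
  case Nil
  then show ?case by (auto simp: lift_def)
next
  case (Cons a w)
  show ?case
  proof (cases "r a")
    case None
    have "\<not> (set u \<subseteq> B1 \<and> a # w = lift u)"
    proof
      assume h: "set u \<subseteq> B1 \<and> a # w = lift u"
      then obtain c u' where u: "u = c # u'" by (cases u) (auto simp: lift_def)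
      with h have "c \<in> B1" "li c = a" by (auto simp: lift_def)
      then show False using r_li[of c] None by simp
    qed
    then show ?thesis using None by simp
  next
    case (Some c)
    have cB: "c \<in> B1" using Some rB1 by blast
    have lc: "li c = a" using rinj[OF r_li[OF cB] Some] .
    show ?thesis
    proof (cases u)
      case Nil
      then show ?thesis using Some by (simp add: lift_def)
    next
      case (Cons c' u')
      have "(set u \<subseteq> B1 \<and> a # w = lift u) \<longleftrightarrow> c' = c \<and> set u' \<subseteq> B1 \<and> w = lift u'"
      proof
        assume h: "set u \<subseteq> B1 \<and> a # w = lift u"
        then have "c' \<in> B1" "li c' = a" "w = lift u'" "set u' \<subseteq> B1" using Cons by (auto simp: lift_def)
        then have "r a = Some c'" using r_li by metis
        then show "c' = c \<and> set u' \<subseteq> B1 \<and> w = lift u'" using Some \<open>w = lift u'\<close> \<open>set u' \<subseteq> B1\<close> by simp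
      next
        assume "c' = c \<and> set u' \<subseteq> B1 \<and> w = lift u'"
        then show "set u \<subseteq> B1 \<and> a # w = lift u" using Cons cB lc by (simp add: lift_def)
      qed
      moreover have "those (map r (a # w)) = Some u \<longleftrightarrow> c' = c \<and> those (map r w) = Some u'"
        using Some Cons by auto
      ultimately show ?thesis using Cons.IH by simp
    qed
  qed
qed

lemma tW_norm: assumes "set U \<subseteq> F" "set V \<subseteq> K" shows "tW (U @ V) = U"
proof -
  have "tW V = []" using assms(2) disj by (cases V) auto
  moreover have "tW (U @ V) = U @ tW V" by (rule takeWhile_append2) (use assms(1) in auto)
  ultimately show ?thesis by simp
qed

lemma dW_norm: assumes "set U \<subseteq> F" "set V \<subseteq> K" shows "dW (U @ V) = V"
proof -
  have "dW V = V" using assms(2) disj by (cases V) auto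
  moreover have "dW (U @ V) = dW V" by (rule dropWhile_append2) (use assms(1) in auto)
  ultimately show ?thesis by simp
qed

lemma g_norm: "set u \<subseteq> B1 \<Longrightarrow> set v \<subseteq> K \<Longrightarrow> g (lift u @ v) = (u, v)"
  by (simp add: g_def tW_norm dW_norm lift_F map_rf_lift)

lemma tW_F: "set (tW w) \<subseteq> F"
  by (induction w) auto

lemma norm_g: "lift (fst (g w)) @ snd (g w) = w"
  unfolding g_def using lift_map_rf[OF tW_F[of w]] by simp

lemma g_valid: "set (dW w) \<subseteq> K \<Longrightarrow> set (fst (g w)) \<subseteq> B1 \<and> set (snd (g w)) \<subseteq> K"
  unfolding g_def using rf_B1 tW_F[of w] by auto

lemma iota_eq:
  assumes "finite (supp x)"
  shows "iota r K x (u, v) = (if set u \<subseteq> B1 \<and> set v \<subseteq> K then x (lift u @ v) else 0)"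
proof -
  let ?Q = "set u \<subseteq> B1 \<and> set v \<subseteq> K"
  have P: "(pr_first r (take l w) = Some u \<and> pr_second K (drop l w) = Some v) \<longleftrightarrow>
     (?Q \<and> w = lift u @ v \<and> l = length u)" if "l \<le> length w" for w l
  proof
    assume h: "pr_first r (take l w) = Some u \<and> pr_second K (drop l w) = Some v"
    then have 1: "set u \<subseteq> B1" "take l w = lift u" using those_iff by (auto simp: pr_first_def)
    moreover from h have 2: "set v \<subseteq> K" "drop l w = v" by (auto simp: pr_second_def split: if_splits)
    moreover have "w = lift u @ v" using 1 2 append_take_drop_id[of l w] by simp
    moreover have "l = length u"
    proof -
      have "length (take l w) = l" using that by simp
      then show ?thesis using 1 by simp
    qed
    ultimately show "?Q \<and> w = lift u @ v \<and> l = length u" by blast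
  next
    assume "?Q \<and> w = lift u @ v \<and> l = length u"
    then show "pr_first r (take l w) = Some u \<and> pr_second K (drop l w) = Some v"
      using those_iff by (auto simp: pr_first_def pr_second_def)
  qed
  have "iota r K x (u, v) = (\<Sum>w \<in> supp x. \<Sum>l \<in> {0..length w}.
      (if pr_first r (take l w) = Some u \<and> pr_second K (drop l w) = Some v then x w else 0))"
    unfolding iota_def by simp
  also have "\<dots> = (\<Sum>w \<in> supp x. \<Sum>l \<in> {0..length w}.
      (if ?Q \<and> w = lift u @ v \<and> l = length u then x w else 0))"
    by (intro sum.cong refl) (simp add: P)
  also have "\<dots> = (\<Sum>w \<in> supp x. if ?Q \<and> w = lift u @ v then x w else 0)"
  proof (intro sum.cong refl)
    fix w
    show "(\<Sum>l \<in> {0..length w}. (if ?Q \<and> w = lift u @ v \<and> l = length u then x w else 0)) =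
       (if ?Q \<and> w = lift u @ v then x w else 0)"
    proof (cases "?Q \<and> w = lift u @ v")
      case True
      then have "length u \<in> {0..length w}" by simp
      then show ?thesis using True by simp
    next
      case False
      have z: "\<And>l. (if ?Q \<and> w = lift u @ v \<and> l = length u then x w else 0) = 0"
        using False by auto
      show ?thesis by (simp only: z sum.neutral_const if_not_P[OF False])
    qed
  qed
  also have "\<dots> = (if ?Q then (\<Sum>w \<in> supp x. if w = lift u @ v then x w else 0) else 0)"
    by (cases "set u \<subseteq> B1"; cases "set v \<subseteq> K") simp_all
  also have "\<dots> = (if ?Q then x (lift u @ v) else 0)"
    using assms by (simp add: supp_def)
  finally show ?thesis .
qed

end



lemma finite_supp_S: "x \<in> S B \<Longrightarrow> finite (supp x)"
  by (simp add: S_def)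

lemma Bar_S: "x \<in> Bar \<Longrightarrow> x \<in> S A"
  by (simp add: Bar_def)

lemma supp_add: "supp (\<lambda>w. x w + y w) \<subseteq> supp x \<union> supp y"
  by (auto simp: supp_def)

lemma supp_smult: "supp (\<lambda>w. c * x w) \<subseteq> supp x"
  by (auto simp: supp_def)

lemma sum_nz: "(\<Sum>i\<in>I. f i) \<noteq> (0::'b::comm_monoid_add) \<Longrightarrow> \<exists>i\<in>I. f i \<noteq> 0"
  by (meson sum.neutral)

lemma shuffle_supp:
  assumes "x \<in> S A" "y \<in> S A"
  shows "finite (supp (shuffle x y))" "\<forall>w\<in>supp (shuffle x y). set w \<subseteq> A"
proof -
  have sub: "supp (shuffle x y) \<subseteq> (\<Union>u\<in>supp x. \<Union>v\<in>supp y. {w. set w \<subseteq> A \<and> length w = length u + length v})"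
  proof
    fix w assume "w \<in> supp (shuffle x y)"
    then have "shuffle x y w \<noteq> 0" by (simp add: supp_def)
    then obtain u where u: "u \<in> supp x" "(\<Sum>v \<in> supp y. x u * y v * sh u v w) \<noteq> 0"
      unfolding shuffle_def by (blast dest: sum_nz)
    then obtain v where v: "v \<in> supp y" "x u * y v * sh u v w \<noteq> 0"
      by (blast dest: sum_nz)
    then have "sh u v w \<noteq> 0" by auto
    from sh_nz[OF this] have "length w = length u + length v" "set w = set u \<union> set v" by auto
    moreover have "set u \<subseteq> A" "set v \<subseteq> A" using u v assms by (auto simp: S_def)
    ultimately show "w \<in> (\<Union>u\<in>supp x. \<Union>v\<in>supp y. {w. set w \<subseteq> A \<and> length w = length u + length v})"
      using u v by auto
  qed
  show "finite (supp (shuffle x y))"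
    by (rule finite_subset[OF sub]) (use assms finA finite_lists_length_eq in \<open>auto simp: S_def\<close>)
  show "\<forall>w\<in>supp (shuffle x y). set w \<subseteq> A" using sub by blast
qed

context fib
begin

lemma iota_add: "finite (supp x) \<Longrightarrow> finite (supp y) \<Longrightarrow>
  iota r K (\<lambda>w. x w + y w) = (\<lambda>p. iota r K x p + iota r K y p)"
proof (rule ext)
  fix p :: "letter list \<times> letter list" assume fx: "finite (supp x)" and fy: "finite (supp y)"
  have f: "finite (supp (\<lambda>w. x w + y w))" by (rule finite_subset[OF supp_add]) (use fx fy in simp)
  obtain u v where p: "p = (u, v)" by (cases p) auto
  show "iota r K (\<lambda>w. x w + y w) p = iota r K x p + iota r K y p"
    unfolding p iota_eq[OF f] iota_eq[OF fx] iota_eq[OF fy] by simp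
qed

lemma iota_smult: "finite (supp x) \<Longrightarrow> iota r K (\<lambda>w. c * x w) = (\<lambda>p. c * iota r K x p)"
proof (rule ext)
  fix p :: "letter list \<times> letter list" assume fx: "finite (supp x)"
  have f: "finite (supp (\<lambda>w. c * x w))" by (rule finite_subset[OF supp_smult]) (use fx in simp)
  obtain u v where p: "p = (u, v)" by (cases p) auto
  show "iota r K (\<lambda>w. c * x w) p = c * iota r K x p"
    unfolding p iota_eq[OF f] iota_eq[OF fx] by simp
qed

lemma iota_unit: "iota r K unit_word = unit_tensor"
proof (rule ext)
  fix p :: "letter list \<times> letter list"
  have f: "finite (supp unit_word)"
  proof -
    have "supp unit_word \<subseteq> {[]}" by (auto simp: supp_def unit_word_def split: if_splits)
    then show ?thesis by (rule finite_subset) simp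
  qed
  obtain u v where p: "p = (u, v)" by (cases p) auto
  show "iota r K unit_word p = unit_tensor p"
    unfolding p iota_eq[OF f] by (auto simp: unit_word_def unit_tensor_def lift_def)
qed

lemma X_g: "finite (supp x) \<Longrightarrow> set (dW w) \<subseteq> K \<Longrightarrow> iota r K x (g w) = x w"
  using iota_eq[of x "fst (g w)" "snd (g w)"] g_valid[of w] norm_g[of w] by simp

lemma g_inj: "inj g"
proof (rule injI)
  fix a b assume "g a = g b"
  then show "a = b" using norm_g[of a] norm_g[of b] by metis
qed

lemma supp_iota: assumes "finite (supp x)"
  shows "supp (iota r K x) = g ` {w \<in> supp x. set (dW w) \<subseteq> K}"
proof
  show "supp (iota r K x) \<subseteq> g ` {w \<in> supp x. set (dW w) \<subseteq> K}"
  proof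
    fix p assume "p \<in> supp (iota r K x)"
    moreover obtain u v where p: "p = (u, v)" by (cases p) auto
    ultimately have h: "set u \<subseteq> B1" "set v \<subseteq> K" "x (lift u @ v) \<noteq> 0"
      using iota_eq[OF assms, of u v] by (auto simp: supp_def split: if_splits)
    have "dW (lift u @ v) = v" using dW_norm[OF lift_F[OF h(1)] h(2)] .
    moreover have "g (lift u @ v) = (u, v)" using g_norm[OF h(1,2)] .
    ultimately show "p \<in> g ` {w \<in> supp x. set (dW w) \<subseteq> K}"
      using h p by (auto simp: supp_def intro!: image_eqI[of _ _ "lift u @ v"])
  qed
next
  show "g ` {w \<in> supp x. set (dW w) \<subseteq> K} \<subseteq> supp (iota r K x)"
    using X_g[OF assms] by (auto simp: supp_def)
qed

lemma iota_T: assumes "finite (supp x)" shows "iota r K x \<in> T B1 K"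
  using supp_iota[OF assms] assms g_valid unfolding T_def by auto

lemma sh_zero_set: "\<not> set w \<subseteq> B \<Longrightarrow> set a \<subseteq> B \<Longrightarrow> set b \<subseteq> B \<Longrightarrow> sh a b w = 0"
  using sh_nz by blast

lemma iota_shuffle:
  assumes fx: "finite (supp x)" and fy: "finite (supp y)" and fs: "finite (supp (shuffle x y))"
  shows "iota r K (shuffle x y) = tshuffle (iota r K x) (iota r K y)"
proof (rule ext)
  fix p :: "letter list \<times> letter list"
  obtain u v where p: "p = (u, v)" by (cases p) auto
  let ?S1 = "{w \<in> supp x. set (dW w) \<subseteq> K}" and ?S2 = "{w \<in> supp y. set (dW w) \<subseteq> K}"
  have fS1: "finite ?S1" "finite ?S2" using fx fy by auto
  define h where "h w1 w2 = x w1 * y w2 * sh (map rf (tW w1)) (map rf (tW w2)) u * sh (dW w1) (dW w2) v" for w1 w2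
  have R: "tshuffle (iota r K x) (iota r K y) (u, v) = (\<Sum>w1\<in>?S1. \<Sum>w2\<in>?S2. h w1 w2)"
  proof -
    have "tshuffle (iota r K x) (iota r K y) (u, v) =
      (\<Sum>p\<in>g ` ?S1. \<Sum>q\<in>g ` ?S2. iota r K x p * iota r K y q * sh (fst p) (fst q) u * sh (snd p) (snd q) v)"
      unfolding tshuffle_def supp_iota[OF fx] supp_iota[OF fy] by simp
    also have "\<dots> = (\<Sum>w1\<in>?S1. \<Sum>w2\<in>?S2. iota r K x (g w1) * iota r K y (g w2) *
       sh (fst (g w1)) (fst (g w2)) u * sh (snd (g w1)) (snd (g w2)) v)"
      by (simp add: sum.reindex[OF inj_on_subset[OF g_inj]])
    also have "\<dots> = (\<Sum>w1\<in>?S1. \<Sum>w2\<in>?S2. h w1 w2)"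
      by (intro sum.cong refl) (simp add: X_g[OF fx] X_g[OF fy], simp add: h_def g_def)
    finally show ?thesis .
  qed
  show "iota r K (shuffle x y) p = tshuffle (iota r K x) (iota r K y) p"
  proof (cases "set u \<subseteq> B1 \<and> set v \<subseteq> K")
    case False
    have hz: "h w1 w2 = 0" if w1: "w1 \<in> ?S1" and w2: "w2 \<in> ?S2" for w1 w2
    proof (cases "set u \<subseteq> B1")
      case True
      then have nv: "\<not> set v \<subseteq> K" using False by simp
      have "sh (dW w1) (dW w2) v = 0" by (rule sh_zero_set[OF nv]) (use w1 w2 in auto)
      then show ?thesis unfolding h_def by simp
    next
      case nu: False
      have a: "set (map rf (tW w)) \<subseteq> B1" for w using rf_B1 tW_F[of w] by auto
      show ?thesis unfolding h_def using sh_zero_set[OF nu a a] by simp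
    qed
    have "(\<Sum>w1\<in>?S1. \<Sum>w2\<in>?S2. h w1 w2) = 0"
      by (intro sum.neutral ballI) (simp add: hz)
    moreover have "iota r K (shuffle x y) (u, v) = 0" using iota_eq[OF fs, of u v] False by simp
    ultimately show ?thesis unfolding p R by simp
  next
    case True
    then have uB: "set u \<subseteq> B1" and vK: "set v \<subseteq> K" by auto
    have lF: "set (lift u) \<subseteq> F" using lift_F[OF uB] .
    have shm: "sh (map rf (tW w1)) (map rf (tW w2)) u = sh (tW w1) (tW w2) (lift u)" for w1 w2
    proof -
      have "sh (map rf (tW w1)) (map rf (tW w2)) (map rf (lift u)) = sh (tW w1) (tW w2) (lift u)"
        by (rule sh_map, rule inj_on_subset[OF rf_inj]) (use tW_F lF in auto)
      then show ?thesis using map_rf_lift[OF uB] by simp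
    qed
    have "iota r K (shuffle x y) (u, v) = shuffle x y (lift u @ v)"
      using iota_eq[OF fs] True by simp
    also have "\<dots> = (\<Sum>w1\<in>supp x. \<Sum>w2\<in>supp y. x w1 * y w2 * sh w1 w2 (lift u @ v))"
      by (simp add: shuffle_def)
    also have "\<dots> = (\<Sum>w1\<in>supp x. if set (dW w1) \<subseteq> K then (\<Sum>w2\<in>supp y. if set (dW w2) \<subseteq> K then h w1 w2 else 0) else 0)"
    proof (intro sum.cong refl)
      fix w1
      show "(\<Sum>w2\<in>supp y. x w1 * y w2 * sh w1 w2 (lift u @ v)) =
        (if set (dW w1) \<subseteq> K then (\<Sum>w2\<in>supp y. if set (dW w2) \<subseteq> K then h w1 w2 else 0) else 0)"
      proof (cases "set (dW w1) \<subseteq> K")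
        case True
        show ?thesis using True
          by (simp, intro sum.cong refl) (simp add: sh_split[OF lF vK disj] h_def shm)
      next
        case False
        then show ?thesis by (simp add: sh_split[OF lF vK disj])
      qed
    qed
    also have "\<dots> = (\<Sum>w1\<in>?S1. \<Sum>w2\<in>?S2. h w1 w2)"
      using fx fy by (simp add: sum.inter_filter)
    finally show ?thesis using R p by simp
  qed
qed

end



lemma rep_mid: "rep (u @ [a, b] @ v) (length u) c d = u @ [c, d] @ v"
  by (simp add: rep_def list_update_append)

lemma rep_mid': "rep (u @ a # b # v) (length u) c d = u @ c # d # v"
  using rep_mid[of u a b v c d] by simp

lemma rep_len[simp]: "length (rep w i a b) = length w"
  by (simp add: rep_def)

lemma rep_nth_other: "j \<noteq> i \<Longrightarrow> j \<noteq> Suc i \<Longrightarrow> rep w i a b ! j = w ! j"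
  by (simp add: rep_def)

lemma rep_self: "Suc i < length w \<Longrightarrow> rep w i (w ! i) (w ! Suc i) = w"
  by (simp add: rep_def)

lemma rep_eq: "Suc i < length w \<Longrightarrow> rep w i a b = take i w @ [a, b] @ drop (Suc (Suc i)) w"
proof -
  assume h: "Suc i < length w"
  define u where "u = take i w"
  define v where "v = drop (Suc (Suc i)) w"
  have w: "w = u @ [w ! i, w ! Suc i] @ v"
  proof -
    have "w = take i w @ drop i w" by simp
    also have "drop i w = w ! i # drop (Suc i) w" using h by (simp add: Cons_nth_drop_Suc)
    also have "drop (Suc i) w = w ! Suc i # drop (Suc (Suc i)) w" using h by (simp add: Cons_nth_drop_Suc)
    finally show ?thesis by (simp add: u_def v_def)
  qed
  have li: "length u = i" using h by (simp add: u_def)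
  have "rep w i a b = rep (u @ [w ! i, w ! Suc i] @ v) (length u) a b" using w li by simp
  also have "\<dots> = u @ [a, b] @ v" by (rule rep_mid)
  finally show ?thesis by (simp add: u_def v_def)
qed

lemma rep_nth: "k < length w \<Longrightarrow> rep w i a b ! k = (if k = Suc i then b else if k = i then a else w ! k)"
  by (simp add: rep_def nth_list_update)

lemma rep_comm: "Suc i < j \<Longrightarrow> rep (rep w i a b) j c d = rep (rep w j c d) i a b"
  by (rule nth_equalityI) (auto simp: rep_nth)

lemma rsum_cong: "(\<And>t. t \<in> set ts \<Longrightarrow> c (fst (snd t)) (snd (snd t)) = c' (fst (snd t)) (snd (snd t))) \<Longrightarrow>
  rsum ts c = rsum ts c'"
  unfolding rsum_def by (metis (no_types, lifting) map_eq_conv)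

lemma rsum_nth: "rsum ts c = (\<Sum>k<length ts. fst (ts ! k) * c (fst (snd (ts ! k))) (snd (snd (ts ! k))))"
  unfolding rsum_def by (simp add: sum_list_sum_nth atLeast0LessThan)

lemma rsum_swap: "rsum ts (\<lambda>a b. rsum ss (\<lambda>c d. f a b c d)) = rsum ss (\<lambda>c d. rsum ts (\<lambda>a b. f a b c d))"
  unfolding rsum_nth by (simp add: sum_distrib_left mult.left_commute sum.swap[of _ "{..<length ts}"])

lemma rsum_zero: "rsum ts (\<lambda>a b. 0) = 0"
  by (simp add: rsum_def)

context fib
begin

definition bad :: "letter list \<Rightarrow> nat \<Rightarrow> bool" where
  "bad w i \<longleftrightarrow> Suc i < length w \<and> w ! i \<in> K \<and> w ! Suc i \<in> F"

definition tmu :: "letter list \<Rightarrow> nat \<Rightarrow> nat" where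
  "tmu w j = (if w ! j \<in> K then length w - j else 0)"

definition mu :: "letter list \<Rightarrow> nat" where
  "mu w = (\<Sum>j<length w. tmu w j)"

lemma mu_split: "Suc i < length w \<Longrightarrow>
  mu w = tmu w i + (tmu w (Suc i) + (\<Sum>j\<in>{..<length w} - {i} - {Suc i}. tmu w j))"
  unfolding mu_def by (simp add: sum.remove[of _ i] sum.remove[of _ "Suc i"])

lemma mu_dec: assumes "bad w i" "a \<in> F" shows "mu (rep w i a b) < mu w"
proof -
  let ?w = "rep w i a b"
  have h: "Suc i < length w" "w ! i \<in> K" "w ! Suc i \<in> F" using assms(1) by (auto simp: bad_def)
  have rest: "(\<Sum>j\<in>{..<length w} - {i} - {Suc i}. tmu ?w j) = (\<Sum>j\<in>{..<length w} - {i} - {Suc i}. tmu w j)"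
    by (intro sum.cong refl) (auto simp: tmu_def rep_nth_other)
  have "?w ! i = a" "?w ! Suc i = b" using h by (auto simp: rep_def)
  then have "tmu ?w i = 0" "tmu ?w (Suc i) < length w - i" using assms(2) disj h(1)
    by (auto simp: tmu_def)
  moreover have "tmu w i = length w - i" "tmu w (Suc i) = 0" using h disj by (auto simp: tmu_def)
  ultimately show ?thesis using mu_split[of i w] mu_split[of i ?w] h(1) rest by simp
qed

lemma rel_Bar: assumes x: "x \<in> Bar" and b: "bad w i"
  shows "x w = rsum (rule (w ! i) (w ! Suc i)) (\<lambda>a b. x (rep w i a b))"
proof -
  let ?s = "length w"
  have h: "Suc i < length w" "w ! i \<in> K" "w ! Suc i \<in> F" using b by (auto simp: bad_def)
  have ch: "chen_integrable ?s (hcomp ?s x)" using x by (simp add: Bar_def Bs_def)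
  define c where "c a b = hcomp ?s x (take i w @ [a, b] @ drop (Suc (Suc i)) w)" for a b
  have l: "1 \<le> Suc i \<and> Suc i < ?s" using h(1) by simp
  have uv: "length (take i w) = Suc i - 1 \<and> length (drop (Suc (Suc i)) w) = ?s - Suc i - 1"
    using h(1) by simp
  have "\<forall>z\<in>Ureg. G c z = 0"
    using ch[unfolded chen_integrable_def, THEN spec[of _ "Suc i"], THEN mp[OF _ l],
       THEN spec[of _ "take i w"], THEN spec[of _ "drop (Suc (Suc i)) w"], THEN mp[OF _ uv]]
    unfolding G_def c_def by simp
  from H1[OF this h(2,3)] have e: "c (w ! i) (w ! Suc i) = rsum (rule (w ! i) (w ! Suc i)) c" .
  have c: "c = (\<lambda>a b. x (rep w i a b))"
  proof (intro ext)
    fix a b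
    have "length (rep w i a b) = ?s" by simp
    then show "c a b = x (rep w i a b)"
      unfolding c_def rep_eq[OF h(1), symmetric] hcomp_def by simp
  qed
  show ?thesis using e rep_self[OF h(1)] unfolding c by simp
qed

lemma allK: "set w \<subseteq> A \<Longrightarrow> (\<forall>i. \<not> bad (c # w) i) \<Longrightarrow> c \<in> K \<Longrightarrow> set (c # w) \<subseteq> K"
proof (induction w arbitrary: c)
  case Nil
  then show ?case by simp
next
  case (Cons d w)
  have "d \<notin> F"
  proof
    assume "d \<in> F"
    then have "bad (c # d # w) 0" using Cons.prems by (simp add: bad_def)
    then show False using Cons.prems by blast
  qed
  then have dK: "d \<in> K" using Cons.prems AFK by auto
  have "\<forall>i. \<not> bad (d # w) i"
  proof
    fix i show "\<not> bad (d # w) i"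
      using Cons.prems(2) spec[OF Cons.prems(2), of "Suc i"] by (simp add: bad_def)
  qed
  then have "set (d # w) \<subseteq> K" using Cons.IH[of d] Cons.prems dK by simp
  then show ?case using Cons.prems by simp
qed

lemma nobad: "set w \<subseteq> A \<Longrightarrow> (\<forall>i. \<not> bad w i) \<Longrightarrow> set (dW w) \<subseteq> K"
proof (induction w)
  case Nil
  then show ?case by simp
next
  case (Cons c w)
  show ?case
  proof (cases "c \<in> F")
    case True
    have "\<forall>i. \<not> bad w i"
    proof
      fix i show "\<not> bad w i"
        using spec[OF Cons.prems(2), of "Suc i"] by (simp add: bad_def)
    qed
    then show ?thesis using Cons True by simp
  next
    case False
    then have "c \<in> K" using Cons.prems AFK by auto
    then show ?thesis using allK[of w c] Cons.prems False by simp
  qed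
qed

lemma nobad_norm: assumes "set U \<subseteq> F" "set V \<subseteq> K" shows "\<not> bad (U @ V) i"
proof
  assume b: "bad (U @ V) i"
  show False
  proof (cases "i < length U")
    case True
    then have "(U @ V) ! i \<in> F" using assms(1) nth_mem[OF True] by (auto simp: nth_append)
    then show False using b disj by (auto simp: bad_def)
  next
    case False
    then have "Suc i - length U < length V" using b by (auto simp: bad_def)
    then have "V ! (Suc i - length U) \<in> set V" by (rule nth_mem)
    then have "(U @ V) ! Suc i \<in> K" using assms(2) False by (auto simp: nth_append)
    then show False using b disj by (auto simp: bad_def)
  qed
qed

lemma Bar_unique: assumes x: "x \<in> Bar" and y: "y \<in> Bar" and e: "iota r K x = iota r K y"
  shows "x w = y w"
proof (induction w rule: measure_induct_rule[of mu])
  case (less w)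
  have fx: "finite (supp x)" and fy: "finite (supp y)"
    using Bar_S[OF x] Bar_S[OF y] by (auto simp: S_def)
  show ?case
  proof (cases "set w \<subseteq> A")
    case False
    then have "x w = 0" "y w = 0" using Bar_S[OF x] Bar_S[OF y] by (auto simp: S_def supp_def)
    then show ?thesis by simp
  next
    case True
    show ?thesis
    proof (cases "\<exists>i. bad w i")
      case True
      then obtain i where b: "bad w i" by blast
      have h: "w ! i \<in> K" "w ! Suc i \<in> F" using b by (auto simp: bad_def)
      have "rsum (rule (w ! i) (w ! Suc i)) (\<lambda>a b. x (rep w i a b)) =
            rsum (rule (w ! i) (w ! Suc i)) (\<lambda>a b. y (rep w i a b))"
      proof (rule rsum_cong)
        fix t assume "t \<in> set (rule (w ! i) (w ! Suc i))"
        then have "fst (snd t) \<in> F" using rule_ok h by blast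
        then show "x (rep w i (fst (snd t)) (snd (snd t))) = y (rep w i (fst (snd t)) (snd (snd t)))"
          using less mu_dec[OF b] by blast
      qed
      then show ?thesis using rel_Bar[OF x b] rel_Bar[OF y b] by simp
    next
      case False
      then have d: "set (dW w) \<subseteq> K" using nobad True by blast
      show ?thesis using X_g[OF fx d] X_g[OF fy d] e by simp
    qed
  qed
qed

function Nf :: "(letter list \<Rightarrow> rat) \<Rightarrow> letter list \<Rightarrow> rat" where
  "Nf base w = (if (\<exists>i. bad w i) then
     (let i = (LEAST i. bad w i) in
       sum_list (map (\<lambda>t. fst t * (if mu (rep w i (fst (snd t)) (snd (snd t))) < mu w
          then Nf base (rep w i (fst (snd t)) (snd (snd t))) else 0)) (rule (w ! i) (w ! Suc i))))
   else base w)"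
  by pat_completeness auto
termination by (relation "measure (\<lambda>(base, w). mu w)") auto

declare Nf.simps[simp del]

lemma Nf_nobad: assumes "\<not> (\<exists>i. bad w i)" shows "Nf base w = base w"
  by (subst Nf.simps, rule if_not_P[OF assms])

lemma Nf_least: assumes "bad w i" "i = (LEAST i. bad w i)"
  shows "Nf base w = rsum (rule (w ! i) (w ! Suc i)) (\<lambda>a b. Nf base (rep w i a b))"
proof -
  have h: "w ! i \<in> K" "w ! Suc i \<in> F" using assms(1) by (auto simp: bad_def)
  have "Nf base w = sum_list (map (\<lambda>t. fst t * (if mu (rep w i (fst (snd t)) (snd (snd t))) < mu w
          then Nf base (rep w i (fst (snd t)) (snd (snd t))) else 0)) (rule (w ! i) (w ! Suc i)))"
    using assms by (subst Nf.simps) (auto simp: Let_def)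
  also have "\<dots> = rsum (rule (w ! i) (w ! Suc i)) (\<lambda>a b. Nf base (rep w i a b))"
    unfolding rsum_def
  proof (rule arg_cong[where f = sum_list], rule map_cong[OF refl])
    fix t assume "t \<in> set (rule (w ! i) (w ! Suc i))"
    then have "fst (snd t) \<in> F" using rule_ok h by blast
    then show "fst t * (if mu (rep w i (fst (snd t)) (snd (snd t))) < mu w
          then Nf base (rep w i (fst (snd t)) (snd (snd t))) else 0) =
        fst t * Nf base (rep w i (fst (snd t)) (snd (snd t)))"
      using mu_dec[OF assms(1)] by simp
  qed
  finally show ?thesis .
qed

lemma Nf_bad: "bad w j \<Longrightarrow> Nf base w = rsum (rule (w ! j) (w ! Suc j)) (\<lambda>a b. Nf base (rep w j a b))"
proof (induction w arbitrary: j rule: measure_induct_rule[of mu])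
  case (less w)
  define i where "i = (LEAST i. bad w i)"
  have bi: "bad w i" unfolding i_def using less.prems by (rule LeastI)
  have ij: "i \<le> j" unfolding i_def using less.prems by (rule Least_le)
  have L: "Nf base w = rsum (rule (w ! i) (w ! Suc i)) (\<lambda>a b. Nf base (rep w i a b))"
    using Nf_least[OF bi i_def] .
  show ?case
  proof (cases "i = j")
    case True
    then show ?thesis using L by simp
  next
    case False
    have hi: "Suc i < length w" "w ! i \<in> K" "w ! Suc i \<in> F" using bi by (auto simp: bad_def)
    have hj: "Suc j < length w" "w ! j \<in> K" "w ! Suc j \<in> F" using less.prems by (auto simp: bad_def)
    have sij: "Suc i < j"
    proof -
      have "j \<noteq> Suc i" using hi(3) hj(2) disj by auto
      then show ?thesis using ij False by simp
    qed
    let ?Ri = "rule (w ! i) (w ! Suc i)" and ?Rj = "rule (w ! j) (w ! Suc j)"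
    have "Nf base w = rsum ?Ri (\<lambda>a b. rsum ?Rj (\<lambda>c d. Nf base (rep (rep w i a b) j c d)))"
      unfolding L
    proof (rule rsum_cong)
      fix t assume t: "t \<in> set ?Ri"
      let ?a = "fst (snd t)" and ?b = "snd (snd t)"
      have aF: "?a \<in> F" using rule_ok t hi by blast
      have nj: "rep w i ?a ?b ! j = w ! j" "rep w i ?a ?b ! Suc j = w ! Suc j"
        using sij by (auto intro!: rep_nth_other)
      have "bad (rep w i ?a ?b) j" using hj nj by (simp add: bad_def)
      from less.IH[OF mu_dec[OF bi aF] this] nj
      show "Nf base (rep w i ?a ?b) = rsum ?Rj (\<lambda>c d. Nf base (rep (rep w i ?a ?b) j c d))" by simp
    qed
    also have "\<dots> = rsum ?Rj (\<lambda>c d. rsum ?Ri (\<lambda>a b. Nf base (rep (rep w i a b) j c d)))"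
      by (rule rsum_swap)
    also have "\<dots> = rsum ?Rj (\<lambda>c d. Nf base (rep w j c d))"
    proof (rule rsum_cong)
      fix t assume t: "t \<in> set ?Rj"
      let ?c = "fst (snd t)" and ?d = "snd (snd t)"
      have cF: "?c \<in> F" using rule_ok t hj by blast
      have ni: "rep w j ?c ?d ! i = w ! i" "rep w j ?c ?d ! Suc i = w ! Suc i"
        using sij by (auto intro!: rep_nth_other)
      have "bad (rep w j ?c ?d) i" using hi ni by (simp add: bad_def)
      from less.IH[OF mu_dec[OF less.prems cF] this] ni
      show "rsum ?Ri (\<lambda>a b. Nf base (rep (rep w i a b) j ?c ?d)) = Nf base (rep w j ?c ?d)"
        by (simp add: rep_comm[OF sij])
    qed
    finally show ?thesis .
  qed
qed

end



context fib
begin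

lemma surj_iota: assumes Y: "Y \<in> T B1 K" shows "\<exists>x\<in>Bar. iota r K x = Y"
proof -
  define base where "base w = Y (g w)" for w
  define Ls where "Ls = (\<lambda>p. length (fst p) + length (snd p)) ` supp Y"
  define x where "x w = (if set w \<subseteq> A \<and> length w \<in> Ls then Nf base w else 0)" for w
  have fY: "finite (supp Y)" and vY: "\<And>p. p \<in> supp Y \<Longrightarrow> set (fst p) \<subseteq> B1 \<and> set (snd p) \<subseteq> K"
    using Y by (auto simp: T_def)
  have fL: "finite Ls" using fY by (simp add: Ls_def)
  have suppx: "supp x \<subseteq> (\<Union>n\<in>Ls. {w. set w \<subseteq> A \<and> length w = n})"
    by (auto simp: supp_def x_def split: if_splits)
  have fx: "finite (supp x)"
    by (rule finite_subset[OF suppx]) (use fL finA finite_lists_length_eq in auto)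
  have xS: "x \<in> S A" using fx suppx by (auto simp: S_def)
  have chen: "chen_integrable s (hcomp s x)" for s
    unfolding chen_integrable_def
  proof (intro allI impI ballI)
    fix l :: nat and u v :: "letter list" and z :: "complex \<times> complex"
    assume l: "1 \<le> l \<and> l < s" and uv: "length u = l - 1 \<and> length v = s - l - 1" and z: "z \<in> Ureg"
    define c where "c a b = hcomp s x (u @ [a, b] @ v)" for a b
    have len: "length (u @ [a, b] @ v) = s" for a b using l uv by (simp; linarith)
    have cx: "c a b = x (u @ [a, b] @ v)" for a b using len[of a b] by (simp add: c_def hcomp_def)
    have rel: "\<forall>b\<in>K. \<forall>a\<in>F. c b a = rsum (rule b a) c"
    proof (intro ballI)
      fix b a assume bK: "b \<in> K" and aF: "a \<in> F"
      have okt: "\<And>t. t \<in> set (rule b a) \<Longrightarrow> fst (snd t) \<in> A \<and> snd (snd t) \<in> A"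
        using rule_ok[OF bK aF] FA by blast
      show "c b a = rsum (rule b a) c"
      proof (cases "set u \<subseteq> A \<and> set v \<subseteq> A \<and> s \<in> Ls")
        case True
        have cN: "a' \<in> A \<Longrightarrow> b' \<in> A \<Longrightarrow> c a' b' = Nf base (u @ [a', b'] @ v)" for a' b'
          using True len[of a' b'] by (simp add: cx x_def)
        have bd: "bad (u @ [b, a] @ v) (length u)" using bK aF by (simp add: bad_def nth_append)
        have "c b a = Nf base (u @ [b, a] @ v)" using cN bK aF FA KA by auto
        also have "\<dots> = rsum (rule b a) (\<lambda>a' b'. Nf base (rep (u @ [b, a] @ v) (length u) a' b'))"
          using Nf_bad[OF bd] by (simp add: nth_append)
        also have "\<dots> = rsum (rule b a) c"
          by (rule rsum_cong) (simp add: rep_mid' cN okt)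
        finally show ?thesis .
      next
        case False
        then have z0: "c a' b' = 0" if "a' \<in> A" "b' \<in> A" for a' b'
          using that len[of a' b'] by (auto simp: cx x_def)
        have "rsum (rule b a) c = rsum (rule b a) (\<lambda>_ _. 0)"
          by (rule rsum_cong) (simp add: z0 okt)
        then show ?thesis using z0[of b a] bK aF FA KA rsum_zero by auto
      qed
    qed
    have "G c z = 0" by (rule H2[OF rel z])
    then show "(\<Sum>a\<in>A. \<Sum>b\<in>A. of_rat (hcomp s x (u @ [a, b] @ v)) * wedge a b z) = 0"
      by (simp add: G_def c_def)
  qed
  have xBar: "x \<in> Bar"
    unfolding Bar_def Bs_def
  proof (intro CollectI conjI allI xS ballI)
    fix s
    have "supp (hcomp s x) \<subseteq> supp x" by (auto simp: supp_def hcomp_def)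
    then show "hcomp s x \<in> S A" using xS by (auto simp: S_def intro: finite_subset)
    show "\<And>w. w \<in> supp (hcomp s x) \<Longrightarrow> length w = s" by (auto simp: supp_def hcomp_def split: if_splits)
    show "chen_integrable s (hcomp s x)" by (rule chen)
  qed
  have "iota r K x = Y"
  proof (rule ext)
    fix p :: "letter list \<times> letter list"
    obtain u v where p: "p = (u, v)" by (cases p) auto
    show "iota r K x p = Y p"
    proof (cases "set u \<subseteq> B1 \<and> set v \<subseteq> K")
      case False
      have "p \<notin> supp Y"
      proof
        assume "p \<in> supp Y"
        then have "set u \<subseteq> B1 \<and> set v \<subseteq> K" using vY[of p] p by simp
        with False show False by simp
      qed
      moreover have "iota r K x (u, v) = 0" by (simp only: iota_eq[OF fx] if_not_P[OF False])
      ultimately show ?thesis using p by (simp add: supp_def)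
    next
      case True
      then have uB: "set u \<subseteq> B1" and vK: "set v \<subseteq> K" by auto
      have lA: "set (lift u @ v) \<subseteq> A" using lift_F[OF uB] vK AFK by auto
      have nb: "\<not> (\<exists>i. bad (lift u @ v) i)" using nobad_norm[OF lift_F[OF uB] vK] by blast
      have ix: "iota r K x p = x (lift u @ v)" using iota_eq[OF fx, of u v] True p by simp
      show ?thesis
      proof (cases "length (lift u @ v) \<in> Ls")
        case True
        then show ?thesis using ix lA Nf_nobad[OF nb] g_norm[OF uB vK] p by (simp add: x_def base_def)
      next
        case False
        have "p \<notin> supp Y"
        proof
          assume "p \<in> supp Y"
          then have "length (fst p) + length (snd p) \<in> Ls" unfolding Ls_def by (rule imageI)
          then show False using False p by simp
        qed
        then show ?thesis using ix False by (simp add: x_def supp_def)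
      qed
    qed
  qed
  then show ?thesis using xBar by blast
qed

theorem main: "shuffle_alg_iso (iota r K) B1 K"
  unfolding shuffle_alg_iso_def
proof (intro conjI ballI allI)
  have fB: "\<And>x. x \<in> Bar \<Longrightarrow> finite (supp x)" using Bar_S by (auto simp: S_def)
  show "bij_betw (iota r K) Bar (T B1 K)"
    unfolding bij_betw_def
  proof
    show "inj_on (iota r K) Bar"
      by (rule inj_onI) (rule ext, rule Bar_unique)
    show "iota r K ` Bar = T B1 K"
      using iota_T[OF fB] surj_iota by blast
  qed
  show "\<And>x y. x \<in> Bar \<Longrightarrow> y \<in> Bar \<Longrightarrow> iota r K (\<lambda>w. x w + y w) = (\<lambda>p. iota r K x p + iota r K y p)"
    using iota_add fB by blast
  show "\<And>c x. x \<in> Bar \<Longrightarrow> iota r K (\<lambda>w. c * x w) = (\<lambda>p. c * iota r K x p)"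
    using iota_smult fB by blast
  show "\<And>x y. x \<in> Bar \<Longrightarrow> y \<in> Bar \<Longrightarrow> iota r K (shuffle x y) = tshuffle (iota r K x) (iota r K y)"
    using iota_shuffle fB shuffle_supp(1) Bar_S by blast
  show "iota r K unit_word = unit_tensor" by (rule iota_unit)
qed

end



lemma sumA: "(\<Sum>a\<in>A. f a) = f Z1 + f Z11 + f Z2 + f Z22 + f Z12"
  by (simp add: A_def add.assoc)

lemma fold_rat:
  "(of_rat a :: complex) / numeral n = of_rat (a / numeral n)"
  "(of_rat a :: complex) * numeral n = of_rat (a * numeral n)"
  "(of_rat a :: complex) + of_rat b = of_rat (a + b)"
  "(of_rat a :: complex) - of_rat b = of_rat (a - b)"
  "- (of_rat a :: complex) = of_rat (- a)"
  by (simp_all add: of_rat_add of_rat_diff of_rat_minus of_rat_divide of_rat_mult)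

lemma G_points:
  assumes "\<forall>z\<in>Ureg. G c z = 0"
  shows "G c (2,3) = 0" "G c (3,2) = 0" "G c (-1,2) = 0" "G c (2,-1) = 0" "G c (-1,3) = 0" "G c (-2,-2) = 0"
  using assms by (auto simp: Ureg_def)

lemma H1_12:
  assumes "\<forall>z\<in>Ureg. G c z = 0"
  shows "c Z2 Z1 = c Z1 Z2 \<and> c Z22 Z1 = c Z1 Z22 \<and> c Z2 Z11 = c Z11 Z2 \<and>
    c Z22 Z11 = c Z11 Z22 + c Z11 Z12 - c Z12 Z11 \<and>
    c Z22 Z12 = c Z12 Z22 - c Z11 Z12 + c Z12 Z11 \<and>
    c Z2 Z12 = c Z1 Z12 - c Z12 Z1 + c Z12 Z2 - c Z11 Z12 + c Z12 Z11"
  using G_points[OF assms]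
  unfolding G_def sumA wedge_def apply simp
  apply (simp only: fold_rat of_rat_eq_0_iff)
  apply (intro conjI; linarith)
  done

lemma H1_21:
  assumes "\<forall>z\<in>Ureg. G c z = 0"
  shows "c Z1 Z2 = c Z2 Z1 \<and> c Z11 Z2 = c Z2 Z11 \<and> c Z1 Z22 = c Z22 Z1 \<and>
    c Z11 Z22 = c Z22 Z11 + c Z22 Z12 - c Z12 Z22 \<and>
    c Z11 Z12 = c Z12 Z11 - c Z22 Z12 + c Z12 Z22 \<and>
    c Z1 Z12 = c Z2 Z12 - c Z12 Z2 + c Z12 Z1 - c Z22 Z12 + c Z12 Z22"
  using G_points[OF assms]
  unfolding G_def sumA wedge_def apply simp
  apply (simp only: fold_rat of_rat_eq_0_iff)
  apply (intro conjI; linarith)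
  done

lemma G_alg:
  assumes z: "z \<in> Ureg"
  obtains z1 z2 p1 p2 q1 q2 s where "z = (z1, z2)"
    "p1 * z1 = 1" "p2 * z2 = 1" "q1 * (1 - z1) = 1" "q2 * (1-z2) = 1" "s * (1 - z1*z2) = 1"
    "\<And>a b. wedge a b z = fst (form a) (z1,z2) * snd (form b) (z1,z2) - snd (form a) (z1,z2) * fst (form b) (z1,z2)"
    "1 / z1 = p1" "1 / z2 = p2" "1 / (1 - z1) = q1" "1 / (1 - z2) = q2" "\<And>x. x / (1 - z1 * z2) = x * s"
proof -
  obtain z1 z2 where zz: "z = (z1, z2)" by fastforce
  have h: "z1 \<noteq> 0" "z1 \<noteq> 1" "z2 \<noteq> 0" "z2 \<noteq> 1" "z1 * z2 \<noteq> 1" using z by (auto simp: Ureg_def zz)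
  define p1 where "p1 = 1/z1"
  define p2 where "p2 = 1/z2"
  define q1 where "q1 = 1/(1-z1)"
  define q2 where "q2 = 1/(1-z2)"
  define s where "s = 1/(1-z1*z2)"
  have e: "p1 * z1 = 1" "p2 * z2 = 1" "q1 * (1 - z1) = 1" "q2 * (1-z2) = 1" "s * (1 - z1*z2) = 1"
    using h by (auto simp: p1_def p2_def q1_def q2_def s_def field_simps)
  show ?thesis
    by (rule that[OF zz e]) (auto simp: wedge_def zz p1_def p2_def q1_def q2_def s_def)
qed

lemma H2_12:
  assumes "c Z2 Z1 = c Z1 Z2" "c Z22 Z1 = c Z1 Z22" "c Z2 Z11 = c Z11 Z2"
    "c Z22 Z11 = c Z11 Z22 + c Z11 Z12 - c Z12 Z11"
    "c Z22 Z12 = c Z12 Z22 - c Z11 Z12 + c Z12 Z11"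
    "c Z2 Z12 = c Z1 Z12 - c Z12 Z1 + c Z12 Z2 - c Z11 Z12 + c Z12 Z11"
    and z: "z \<in> Ureg"
  shows "G c z = 0"
proof -
  obtain z1 z2 p1 p2 q1 q2 s where zz: "z = (z1, z2)" and
    e: "p1 * z1 = 1" "p2 * z2 = 1" "q1 * (1 - z1) = 1" "q2 * (1-z2) = 1" "s * (1 - z1*z2) = 1"
    and w: "\<And>a b. wedge a b z = fst (form a) (z1,z2) * snd (form b) (z1,z2) - snd (form a) (z1,z2) * fst (form b) (z1,z2)"
    and r: "1 / z1 = p1" "1 / z2 = p2" "1 / (1 - z1) = q1" "1 / (1 - z2) = q2" and ds: "\<And>x. x / (1 - z1 * z2) = x * s"
    using G_alg[OF z] by blast
  show ?thesis
    unfolding G_def sumA w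
    apply (simp add: assms of_rat_add of_rat_diff r)
    apply (simp only: ds)
    using e apply algebra
    done
qed

lemma H2_21:
  assumes "c Z1 Z2 = c Z2 Z1" "c Z11 Z2 = c Z2 Z11" "c Z1 Z22 = c Z22 Z1"
    "c Z11 Z22 = c Z22 Z11 + c Z22 Z12 - c Z12 Z22"
    "c Z11 Z12 = c Z12 Z11 - c Z22 Z12 + c Z12 Z22"
    "c Z1 Z12 = c Z2 Z12 - c Z12 Z2 + c Z12 Z1 - c Z22 Z12 + c Z12 Z22"
    and z: "z \<in> Ureg"
  shows "G c z = 0"
proof -
  obtain z1 z2 p1 p2 q1 q2 s where zz: "z = (z1, z2)" and
    e: "p1 * z1 = 1" "p2 * z2 = 1" "q1 * (1 - z1) = 1" "q2 * (1-z2) = 1" "s * (1 - z1*z2) = 1"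
    and w: "\<And>a b. wedge a b z = fst (form a) (z1,z2) * snd (form b) (z1,z2) - snd (form a) (z1,z2) * fst (form b) (z1,z2)"
    and r: "1 / z1 = p1" "1 / z2 = p2" "1 / (1 - z1) = q1" "1 / (1 - z2) = q2" and ds: "\<And>x. x / (1 - z1 * z2) = x * s"
    using G_alg[OF z] by blast
  show ?thesis
    unfolding G_def sumA w
    apply (simp add: assms of_rat_add of_rat_diff r)
    apply (simp only: ds)
    using e apply algebra
    done
qed

fun rule12 :: "letter \<Rightarrow> letter \<Rightarrow> (rat \<times> letter \<times> letter) list" where
  "rule12 Z2 Z1 = [(1, Z1, Z2)]"
| "rule12 Z22 Z1 = [(1, Z1, Z22)]"
| "rule12 Z2 Z11 = [(1, Z11, Z2)]"
| "rule12 Z22 Z11 = [(1, Z11, Z22), (1, Z11, Z12), (-1, Z12, Z11)]"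
| "rule12 Z22 Z12 = [(1, Z12, Z22), (-1, Z11, Z12), (1, Z12, Z11)]"
| "rule12 Z2 Z12 = [(1, Z1, Z12), (-1, Z12, Z1), (1, Z12, Z2), (-1, Z11, Z12), (1, Z12, Z11)]"
| "rule12 _ _ = []"

fun rule21 :: "letter \<Rightarrow> letter \<Rightarrow> (rat \<times> letter \<times> letter) list" where
  "rule21 Z1 Z2 = [(1, Z2, Z1)]"
| "rule21 Z11 Z2 = [(1, Z2, Z11)]"
| "rule21 Z1 Z22 = [(1, Z22, Z1)]"
| "rule21 Z11 Z22 = [(1, Z22, Z11), (1, Z22, Z12), (-1, Z12, Z22)]"
| "rule21 Z11 Z12 = [(1, Z12, Z11), (-1, Z22, Z12), (1, Z12, Z22)]"
| "rule21 Z1 Z12 = [(1, Z2, Z12), (-1, Z12, Z2), (1, Z12, Z1), (-1, Z22, Z12), (1, Z12, Z22)]"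
| "rule21 _ _ = []"

lemma fib12: "fib restr12 {Z1, Z11, Z12} A2_12 A1_12 rule12"
proof
  show "A = {Z1, Z11, Z12} \<union> A2_12" by (auto simp: A_def A2_12_def)
  show "{Z1, Z11, Z12} \<inter> A2_12 = {}" by (simp add: A2_12_def)
  show "\<And>a. (restr12 a \<noteq> None) = (a \<in> {Z1, Z11, Z12})" by (case_tac a) auto
  show "\<And>a b c. restr12 a = Some c \<Longrightarrow> restr12 b = Some c \<Longrightarrow> a = b"
    by (case_tac a; case_tac b) auto
  show "\<And>a c. restr12 a = Some c \<Longrightarrow> c \<in> A1_12" by (case_tac a) (auto simp: A1_12_def)
  show "\<And>c. c \<in> A1_12 \<Longrightarrow> \<exists>a. restr12 a = Some c"
  proof -
    fix c assume "c \<in> A1_12"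
    then have "c = Z1 \<or> c = Z11 \<or> c = Z12_1" by (simp add: A1_12_def)
    then show "\<exists>a. restr12 a = Some c"
      by (elim disjE) (metis restr12.simps(1), metis restr12.simps(2), metis restr12.simps(3))
  qed
  show "\<And>b a t. b \<in> A2_12 \<Longrightarrow> a \<in> {Z1, Z11, Z12} \<Longrightarrow> t \<in> set (rule12 b a) \<Longrightarrow>
      fst (snd t) \<in> {Z1, Z11, Z12} \<and> snd (snd t) \<in> A"
    by (auto simp: A2_12_def A_def)
  show "\<And>c b a. \<forall>z\<in>Ureg. G c z = 0 \<Longrightarrow> b \<in> A2_12 \<Longrightarrow> a \<in> {Z1, Z11, Z12} \<Longrightarrow> c b a = rsum (rule12 b a) c"
  proof -
    fix c b a assume "\<forall>z\<in>Ureg. G c z = 0" "b \<in> A2_12" "a \<in> {Z1, Z11, Z12}"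
    then show "c b a = rsum (rule12 b a) c"
      using H1_12[of c] by (auto simp: A2_12_def rsum_def)
  qed
  show "\<And>c z. \<forall>b\<in>A2_12. \<forall>a\<in>{Z1, Z11, Z12}. c b a = rsum (rule12 b a) c \<Longrightarrow> z \<in> Ureg \<Longrightarrow> G c z = 0"
  proof -
    fix c z assume h: "\<forall>b\<in>A2_12. \<forall>a\<in>{Z1, Z11, Z12}. c b a = rsum (rule12 b a) c" and z: "z \<in> Ureg"
    show "G c z = 0"
      by (rule H2_12[OF _ _ _ _ _ _ z]) (use h in \<open>simp_all add: A2_12_def rsum_def\<close>)
  qed
qed

lemma fib21: "fib restr21 {Z2, Z22, Z12} A1_21 A2_21 rule21"
proof
  show "A = {Z2, Z22, Z12} \<union> A1_21" by (auto simp: A_def A1_21_def)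
  show "{Z2, Z22, Z12} \<inter> A1_21 = {}" by (simp add: A1_21_def)
  show "\<And>a. (restr21 a \<noteq> None) = (a \<in> {Z2, Z22, Z12})" by (case_tac a) auto
  show "\<And>a b c. restr21 a = Some c \<Longrightarrow> restr21 b = Some c \<Longrightarrow> a = b"
    by (case_tac a; case_tac b) auto
  show "\<And>a c. restr21 a = Some c \<Longrightarrow> c \<in> A2_21" by (case_tac a) (auto simp: A2_21_def)
  show "\<And>c. c \<in> A2_21 \<Longrightarrow> \<exists>a. restr21 a = Some c"
  proof -
    fix c assume "c \<in> A2_21"
    then have "c = Z2 \<or> c = Z22 \<or> c = Z12_2" by (simp add: A2_21_def)
    then show "\<exists>a. restr21 a = Some c"
      by (elim disjE) (metis restr21.simps(1), metis restr21.simps(2), metis restr21.simps(3))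
  qed
  show "\<And>b a t. b \<in> A1_21 \<Longrightarrow> a \<in> {Z2, Z22, Z12} \<Longrightarrow> t \<in> set (rule21 b a) \<Longrightarrow>
      fst (snd t) \<in> {Z2, Z22, Z12} \<and> snd (snd t) \<in> A"
    by (auto simp: A1_21_def A_def)
  show "\<And>c b a. \<forall>z\<in>Ureg. G c z = 0 \<Longrightarrow> b \<in> A1_21 \<Longrightarrow> a \<in> {Z2, Z22, Z12} \<Longrightarrow> c b a = rsum (rule21 b a) c"
  proof -
    fix c b a assume "\<forall>z\<in>Ureg. G c z = 0" "b \<in> A1_21" "a \<in> {Z2, Z22, Z12}"
    then show "c b a = rsum (rule21 b a) c"
      using H1_21[of c] by (auto simp: A1_21_def rsum_def)
  qed
  show "\<And>c z. \<forall>b\<in>A1_21. \<forall>a\<in>{Z2, Z22, Z12}. c b a = rsum (rule21 b a) c \<Longrightarrow> z \<in> Ureg \<Longrightarrow> G c z = 0"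
  proof -
    fix c z assume h: "\<forall>b\<in>A1_21. \<forall>a\<in>{Z2, Z22, Z12}. c b a = rsum (rule21 b a) c" and z: "z \<in> Ureg"
    show "G c z = 0"
      by (rule H2_21[OF _ _ _ _ _ _ z]) (use h in \<open>simp_all add: A1_21_def rsum_def\<close>)
  qed
qed

theorem proposition5p7:
  shows "shuffle_alg_iso iota12 A1_12 A2_12 \<and> shuffle_alg_iso iota21 A2_21 A1_21"
  unfolding iota12_def iota21_def
  using fib.main[OF fib12] fib.main[OF fib21] by simp



end
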